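(* Let $V=\{1,\dots,n\}$, let $(\bar\Omega,\mathcal F,\mathbb P)$ be a probability space, and let $\sigma:\{0,1\}^n\times\bar\Omega\to\mathbb R$ be such that for every $\omega\in\bar\Omega$ the set function $X\mapsto\sigma(X,\omega)$ (identifying $X\subseteq V$ with its characteristic vector $x\in\{0,1\}^n$) is nondecreasing and submodular, and for each $x$ the random variable $\sigma(x)=\sigma(x,\cdot)$ is integrable. Let $\mathcal X\subseteq\{0,1\}^n$ and $\alpha\in(0,1]$. Fix $\bar x\in\{0,1\}^n$ with support $\bar X=\{j\in V:\bar x_j=1\}$. Then for every $x\in\mathcal X$ and every $\psi\in\mathbb R$ with $\psi\le \mathrm{CVaR}_\alpha(\sigma(x))$, we have $$\psi\le \mathrm{CVaR}_\alpha(\sigma(\bar x))+\sum_{j\in V\setminus\bar X}\big(\mathrm{CVaR}_1(\sigma(\bar x+\mathbf e_j))-\mathrm{CVaR}_\alpha(\sigma(\bar x))\big)x_j .$$ That is, this inequality is valid for the set $\{(x,\psi): x\in\mathcal X,\ \psi\le\mathrm{CVaR}_\alpha(\sigma(x))\}$.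
   Context: For a random variable $Y$ with finite expectation and $\alpha\in(0,1]$, the conditional value-at-risk is $\mathrm{CVaR}_\alpha(Y)=\max_{\eta\in\mathbb R}\{\eta-\frac1\alpha\mathbb E([\eta-Y]_+)\}$, where $[z]_+=\max(z,0)$; in particular $\mathrm{CVaR}_1(Y)=\mathbb E[Y]$. $\mathbf e_j$ denotes the $j$-th unit vector in $\mathbb R^n$. *)

theory Defs
  imports "HOL-Probability.Probability"
begin

text \<open>Conditional value-at-risk (lower-tail convention of the paper):
  CVaR_alpha(Y) = max over eta of eta - (1/alpha) E[(eta - Y)_+].\<close>
definition cvar :: "'a measure \<Rightarrow> real \<Rightarrow> ('a \<Rightarrow> real) \<Rightarrow> real" where
  "cvar M \<alpha> Y = (SUP \<eta>::real. \<eta> - (1 / \<alpha>) * (\<integral>\<omega>. max (\<eta> - Y \<omega>) 0 \<partial>M))"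

definition nondecreasing_on :: "'v set \<Rightarrow> ('v set \<Rightarrow> real) \<Rightarrow> bool" where
  "nondecreasing_on V f \<longleftrightarrow> (\<forall>X Y. X \<subseteq> Y \<and> Y \<subseteq> V \<longrightarrow> f X \<le> f Y)"

definition submodular_on :: "'v set \<Rightarrow> ('v set \<Rightarrow> real) \<Rightarrow> bool" where
  "submodular_on V f \<longleftrightarrow>
     (\<forall>X Y. X \<subseteq> V \<and> Y \<subseteq> V \<longrightarrow> f (X \<union> Y) + f (X \<inter> Y) \<le> f X + f Y)"

end

theory Submission
  imports Defs
begin


lemma cvar_term_le:
  fixes Y :: "'a \<Rightarrow> real" and \<eta> \<alpha> :: real
  assumes "prob_space M" "integrable M Y" "0 < \<alpha>" "\<alpha> \<le> 1"
  shows "\<eta> - (1 / \<alpha>) * (\<integral>\<omega>. max (\<eta> - Y \<omega>) 0 \<partial>M) \<le> (\<integral>\<omega>. Y \<omega> \<partial>M)"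
proof -
  interpret prob_space M by fact
  let ?I = "\<integral>\<omega>. max (\<eta> - Y \<omega>) 0 \<partial>M"
  have I0: "0 \<le> ?I" by (rule Bochner_Integration.integral_nonneg) auto
  have "(\<integral>\<omega>. (\<eta> - Y \<omega>) \<partial>M) \<le> ?I"
    using assms(2) by (intro integral_mono) auto
  moreover have "(\<integral>\<omega>. (\<eta> - Y \<omega>) \<partial>M) = \<eta> - (\<integral>\<omega>. Y \<omega> \<partial>M)"
    using assms(2) by (simp add: prob_space)
  moreover have "?I \<le> (1/\<alpha>) * ?I"
  proof -
    have "\<alpha> * ?I \<le> ?I" using I0 assms(3,4) by (simp add: mult_left_le_one_le)
    then show ?thesis using assms(3) by (simp add: field_simps)
  qed
  ultimately show ?thesis by linarith
qed

lemma cvar_bdd: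
  assumes "prob_space M" "integrable M Y" "0 < \<alpha>" "\<alpha> \<le> 1"
  shows "bdd_above (range (\<lambda>\<eta>::real. \<eta> - (1 / \<alpha>) * (\<integral>\<omega>. max (\<eta> - Y \<omega>) 0 \<partial>M)))"
  using cvar_term_le[OF assms] by (intro bdd_aboveI2) 

lemma cvar_le_exp:
  assumes "prob_space M" "integrable M Y" "0 < \<alpha>" "\<alpha> \<le> 1"
  shows "cvar M \<alpha> Y \<le> (\<integral>\<omega>. Y \<omega> \<partial>M)"
  unfolding cvar_def using cvar_term_le[OF assms] by (intro cSUP_least) auto

lemma cvar_mono:
  assumes "prob_space M" "integrable M Y" "integrable M Z" "0 < \<alpha>" "\<alpha> \<le> 1"
    and "\<And>\<omega>. \<omega> \<in> space M \<Longrightarrow> Y \<omega> \<le> Z \<omega>"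
  shows "cvar M \<alpha> Y \<le> cvar M \<alpha> Z"
  unfolding cvar_def
proof (rule cSUP_mono)
  show "bdd_above (range (\<lambda>\<eta>::real. \<eta> - (1 / \<alpha>) * (\<integral>\<omega>. max (\<eta> - Z \<omega>) 0 \<partial>M)))"
    using cvar_bdd[OF assms(1,3,4,5)] .
  fix \<eta> :: real
  interpret prob_space M by fact
  have "(\<integral>\<omega>. max (\<eta> - Z \<omega>) 0 \<partial>M) \<le> (\<integral>\<omega>. max (\<eta> - Y \<omega>) 0 \<partial>M)"
  proof (rule integral_mono)
    show "integrable M (\<lambda>\<omega>. max (\<eta> - Z \<omega>) 0)" using assms(3) by auto
    show "integrable M (\<lambda>\<omega>. max (\<eta> - Y \<omega>) 0)" using assms(2) by auto
    fix \<omega> assume "\<omega> \<in> space M"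
    then have "Y \<omega> \<le> Z \<omega>" using assms(6) by auto
    then show "max (\<eta> - Z \<omega>) 0 \<le> max (\<eta> - Y \<omega>) 0" by auto
  qed
  then have "\<eta> - (1 / \<alpha>) * (\<integral>\<omega>. max (\<eta> - Y \<omega>) 0 \<partial>M) \<le> \<eta> - (1 / \<alpha>) * (\<integral>\<omega>. max (\<eta> - Z \<omega>) 0 \<partial>M)"
    using assms(4) by (simp add: divide_right_mono)
  then show "\<exists>m\<in>UNIV. \<eta> - (1 / \<alpha>) * (\<integral>\<omega>. max (\<eta> - Y \<omega>) 0 \<partial>M) \<le> m - (1 / \<alpha>) * (\<integral>\<omega>. max (m - Z \<omega>) 0 \<partial>M)"
    by blast
qed auto

lemma exp_le_cvar1:
  assumes "prob_space M" "integrable M Y"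
  shows "(\<integral>\<omega>. Y \<omega> \<partial>M) \<le> cvar M 1 Y"
proof -
  interpret prob_space M by fact
  define s where "s = (\<lambda>i::nat. \<lambda>\<omega>. max (Y \<omega> - real i) 0)"
  have Ym[measurable]: "Y \<in> borel_measurable M" using assms(2) by auto
  have lim: "(\<lambda>i. integral\<^sup>L M (s i)) \<longlonglongrightarrow> integral\<^sup>L M (\<lambda>_. 0)"
  proof (rule integral_dominated_convergence[where w="\<lambda>\<omega>. \<bar>Y \<omega>\<bar>"])
    show "\<And>i. s i \<in> borel_measurable M" unfolding s_def by measurable
    show "integrable M (\<lambda>\<omega>. \<bar>Y \<omega>\<bar>)" using assms(2) by auto
    show "AE x in M. (\<lambda>i. s i x) \<longlonglongrightarrow> 0"
    proof (rule AE_I2, rule tendsto_eventually)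
      fix x
      show "\<forall>\<^sub>F i in sequentially. s i x = 0"
        unfolding eventually_sequentially s_def
      proof (intro exI allI impI)
        fix i assume "nat \<lceil>Y x\<rceil> \<le> i"
        then have "Y x \<le> real i"
          by (metis of_nat_le_iff order_trans real_nat_ceiling_ge)
        then show "max (Y x - real i) 0 = 0" by auto
      qed
    qed
    show "\<And>i. AE x in M. norm (s i x) \<le> \<bar>Y x\<bar>"
      unfolding s_def by (auto simp: max_def)
  qed auto
  have le: "(\<integral>\<omega>. Y \<omega> \<partial>M) - integral\<^sup>L M (s i) \<le> cvar M 1 Y" for i
  proof -
    have eq: "(\<lambda>\<omega>. max (real i - Y \<omega>) 0) = (\<lambda>\<omega>. (real i - Y \<omega>) + s i \<omega>)"
      unfolding s_def by (auto simp: max_def fun_eq_iff)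
    have si: "integrable M (s i)" unfolding s_def using assms(2) by auto
    have "(\<integral>\<omega>. max (real i - Y \<omega>) 0 \<partial>M) = real i - (\<integral>\<omega>. Y \<omega> \<partial>M) + integral\<^sup>L M (s i)"
      unfolding eq using assms(2) si by (simp add: prob_space)
    then have "real i - (1 / 1) * (\<integral>\<omega>. max (real i - Y \<omega>) 0 \<partial>M) = (\<integral>\<omega>. Y \<omega> \<partial>M) - integral\<^sup>L M (s i)"
      by simp
    moreover have "real i - (1 / 1) * (\<integral>\<omega>. max (real i - Y \<omega>) 0 \<partial>M) \<le> cvar M 1 Y"
      unfolding cvar_def using cvar_bdd[OF assms, of 1] by (intro cSUP_upper) auto
    ultimately show ?thesis by simp
  qed
  have "(\<lambda>i. (\<integral>\<omega>. Y \<omega> \<partial>M) - integral\<^sup>L M (s i)) \<longlonglongrightarrow> (\<integral>\<omega>. Y \<omega> \<partial>M) - 0"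
    using lim by (intro tendsto_diff) auto
  then show ?thesis using le by (intro LIMSEQ_le_const2) auto
qed


lemma submod_sum:
  fixes f :: "nat set \<Rightarrow> real"
  assumes sm: "submodular_on V f" and XV: "Xb \<subseteq> V"
  shows "finite K \<Longrightarrow> K \<subseteq> V \<Longrightarrow> K \<inter> Xb = {} \<Longrightarrow>
    f (Xb \<union> K) \<le> f Xb + (\<Sum>j\<in>K. f (insert j Xb) - f Xb)"
proof (induction K rule: finite_induct)
  case empty then show ?case by simp
next
  case (insert j K)
  have IH: "f (Xb \<union> K) \<le> f Xb + (\<Sum>j\<in>K. f (insert j Xb) - f Xb)"
    using insert by auto
  have "f ((Xb \<union> K) \<union> insert j Xb) + f ((Xb \<union> K) \<inter> insert j Xb) \<le> f (Xb \<union> K) + f (insert j Xb)"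
    using sm[unfolded submodular_on_def, rule_format, of "Xb \<union> K" "insert j Xb"] insert.prems XV by auto
  moreover have "(Xb \<union> K) \<union> insert j Xb = Xb \<union> insert j K" by auto
  moreover have "(Xb \<union> K) \<inter> insert j Xb = Xb" using insert.hyps(2) insert.prems by auto
  ultimately have "f (Xb \<union> insert j K) \<le> f (Xb \<union> K) + f (insert j Xb) - f Xb" by simp
  then show ?case using IH insert.hyps by simp
qed

theorem proposition1:
  fixes M :: "'a measure" and n :: nat
    and \<sigma> :: "nat set \<Rightarrow> 'a \<Rightarrow> real"
    and \<X> :: "nat set set" and \<alpha> :: real and Xbar :: "nat set"
  assumes "prob_space M"
    and "\<forall>\<omega>\<in>space M. nondecreasing_on {1..n} (\<lambda>X. \<sigma> X \<omega>)"
    and "\<forall>\<omega>\<in>space M. submodular_on {1..n} (\<lambda>X. \<sigma> X \<omega>)"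
    and "\<forall>X. X \<subseteq> {1..n} \<longrightarrow> integrable M (\<sigma> X)"
    and "\<X> \<subseteq> Pow {1..n}"
    and "0 < \<alpha>" and "\<alpha> \<le> 1"
    and "Xbar \<subseteq> {1..n}"
  shows "\<forall>X\<in>\<X>. \<forall>\<psi>::real. \<psi> \<le> cvar M \<alpha> (\<sigma> X) \<longrightarrow>
           \<psi> \<le> cvar M \<alpha> (\<sigma> Xbar)
                + (\<Sum>j\<in>{1..n} - Xbar.
                     (cvar M 1 (\<sigma> (insert j Xbar)) - cvar M \<alpha> (\<sigma> Xbar)) * (if j \<in> X then 1 else 0))"
proof (intro ballI allI impI)
  fix X \<psi>
  assume XX: "X \<in> \<X>" and psi: "\<psi> \<le> cvar M \<alpha> (\<sigma> X)"
  have XV: "X \<subseteq> {1..n}" using XX assms(5) by auto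
  define K where "K = X - Xbar"
  have KV: "K \<subseteq> {1..n}" "finite K" "K \<inter> Xbar = {}" using XV unfolding K_def
    by (auto intro: finite_subset)
  have int: "\<And>Y. Y \<subseteq> {1..n} \<Longrightarrow> integrable M (\<sigma> Y)" using assms(4) by auto
  have intj: "\<And>j. j \<in> K \<Longrightarrow> integrable M (\<sigma> (insert j Xbar))"
    using KV assms(8) by (intro int) auto
  define C where "C = cvar M \<alpha> (\<sigma> Xbar)"
  define EB where "EB = (\<integral>\<omega>. \<sigma> Xbar \<omega> \<partial>M)"
  define c where "c = (\<lambda>j. cvar M 1 (\<sigma> (insert j Xbar)))"
  define E where "E = (\<lambda>j. (\<integral>\<omega>. \<sigma> (insert j Xbar) \<omega> \<partial>M))"
  have sumeq: "(\<Sum>j\<in>{1..n} - Xbar. (c j - C) * (if j \<in> X then 1 else 0)) = (\<Sum>j\<in>K. c j - C)"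
  proof -
    have "(\<Sum>j\<in>{1..n} - Xbar. (c j - C) * (if j \<in> X then 1 else 0))
        = (\<Sum>j\<in>{1..n} - Xbar. if j \<in> X then c j - C else 0)"
      by (intro sum.cong) auto
    also have "\<dots> = (\<Sum>j\<in>({1..n} - Xbar) \<inter> X. c j - C)"
      by (rule sum.inter_restrict[symmetric]) auto
    also have "({1..n} - Xbar) \<inter> X = K" using XV unfolding K_def by auto
    finally show ?thesis .
  qed
  have CEB: "C \<le> EB" unfolding C_def EB_def
    using cvar_le_exp[OF assms(1) int[OF assms(8)] assms(6,7)] .
  have cE: "E j \<le> c j" if "j \<in> K" for j
    unfolding c_def E_def using exp_le_cvar1[OF assms(1) intj[OF that]] .
  have main: "\<psi> \<le> C + (\<Sum>j\<in>K. c j - C)"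
  proof (cases "K = {}")
    case True
    then have "X \<subseteq> Xbar" unfolding K_def by auto
    have "cvar M \<alpha> (\<sigma> X) \<le> C" unfolding C_def
    proof (rule cvar_mono[OF assms(1) int[OF XV] int[OF assms(8)] assms(6,7)])
      fix \<omega> assume "\<omega> \<in> space M"
      then show "\<sigma> X \<omega> \<le> \<sigma> Xbar \<omega>" using assms(2) \<open>X \<subseteq> Xbar\<close> assms(8)
        unfolding nondecreasing_on_def by auto
    qed
    then show "\<psi> \<le> C + (\<Sum>j\<in>K. c j - C)" using psi True by simp
  next
    case False
    have pw: "\<sigma> X \<omega> \<le> \<sigma> Xbar \<omega> + (\<Sum>j\<in>K. \<sigma> (insert j Xbar) \<omega> - \<sigma> Xbar \<omega>)"
      if "\<omega> \<in> space M" for \<omega>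
    proof -
      have "\<sigma> X \<omega> \<le> \<sigma> (Xbar \<union> K) \<omega>"
        using assms(2) that XV assms(8) unfolding nondecreasing_on_def K_def by auto
      also have "\<dots> \<le> \<sigma> Xbar \<omega> + (\<Sum>j\<in>K. \<sigma> (insert j Xbar) \<omega> - \<sigma> Xbar \<omega>)"
        using submod_sum[of "{1..n}" "\<lambda>X. \<sigma> X \<omega>" Xbar K] assms(3) that assms(8) KV by auto
      finally show ?thesis .
    qed
    have "(\<integral>\<omega>. \<sigma> X \<omega> \<partial>M) \<le> (\<integral>\<omega>. \<sigma> Xbar \<omega> + (\<Sum>j\<in>K. \<sigma> (insert j Xbar) \<omega> - \<sigma> Xbar \<omega>) \<partial>M)"
      using pw int[OF XV] int[OF assms(8)] intj by (intro integral_mono) auto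
    also have "\<dots> = EB + (\<Sum>j\<in>K. E j - EB)"
      unfolding EB_def E_def
      using int[OF assms(8)] intj
      by (simp add: integral_add integral_sum integral_diff integrable_sum)
    finally have EX: "(\<integral>\<omega>. \<sigma> X \<omega> \<partial>M) \<le> EB + (\<Sum>j\<in>K. E j - EB)" .
    have "cvar M \<alpha> (\<sigma> X) \<le> (\<integral>\<omega>. \<sigma> X \<omega> \<partial>M)"
      using cvar_le_exp[OF assms(1) int[OF XV] assms(6,7)] .
    moreover have "EB + (\<Sum>j\<in>K. E j - EB) \<le> C + (\<Sum>j\<in>K. c j - C)"
    proof -
      have k1: "1 \<le> real (card K)" using False KV(2) by (simp add: Suc_leI card_gt_0_iff)
      have "(\<Sum>j\<in>K. E j) \<le> (\<Sum>j\<in>K. c j)" using cE by (rule sum_mono)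
      moreover have "(1 - real (card K)) * EB \<le> (1 - real (card K)) * C"
        using k1 CEB by (intro mult_left_mono_neg) auto
      ultimately show ?thesis by (simp add: sum_subtractf algebra_simps)
    qed
    ultimately show "\<psi> \<le> C + (\<Sum>j\<in>K. c j - C)" using psi EX by linarith
  qed
  show "\<psi> \<le> cvar M \<alpha> (\<sigma> Xbar) + (\<Sum>j\<in>{1..n} - Xbar.
          (cvar M 1 (\<sigma> (insert j Xbar)) - cvar M \<alpha> (\<sigma> Xbar)) * (if j \<in> X then 1 else 0))"
    using main sumeq unfolding C_def c_def by simp
qed

end
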